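(* Let $n\ge 3$ and consider the $C_n$ board (a cycle graph with $n$ vertices and $n$ edges embedded in the plane, with its single bounded cell). Suppose some of its edges are marked with arrows so that no vertex is a sink or a source, and suppose no unmarked edge is markable. Then the number of unmarked (hence unmarkable) edges is even.
   Context: A board is a connected planar graph embedded in the plane together with its bounded cells. Edges may be marked with an arrow pointing in one of the two directions along the edge. A sink is a vertex all of whose incident edges are marked with arrows pointing toward it; a source is a vertex all of whose incident edges are marked with arrows pointing away from it. An unmarked edge is markable if it can be marked with an arrow in at least one direction without creating a sink or a source; an unmarked edge that is not markable is called unmarkable. *)

theory Defs
  imports Main
begin

text \<open>The C_n board: vertices 0..n-1, edges 0..n-1, where edge e joins vertex e
  and vertex (e+1) mod n. A marking assigns to each edge either None (unmarked)
  or Some d: d = True means the arrow points from e to (e+1) mod n,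
  d = False means it points from (e+1) mod n to e.\<close>

type_synonym marking = "nat \<Rightarrow> bool option"

definition incident :: "nat \<Rightarrow> nat \<Rightarrow> nat \<Rightarrow> bool" where
  "incident n e v \<longleftrightarrow> e < n \<and> (v = e \<or> v = Suc e mod n)"

definition points_to :: "nat \<Rightarrow> marking \<Rightarrow> nat \<Rightarrow> nat \<Rightarrow> bool" where
  "points_to n m e v \<longleftrightarrow>
     (m e = Some True \<and> v = Suc e mod n) \<or> (m e = Some False \<and> v = e)"

definition points_from :: "nat \<Rightarrow> marking \<Rightarrow> nat \<Rightarrow> nat \<Rightarrow> bool" where
  "points_from n m e v \<longleftrightarrow>
     (m e = Some True \<and> v = e) \<or> (m e = Some False \<and> v = Suc e mod n)"

definition is_sink :: "nat \<Rightarrow> marking \<Rightarrow> nat \<Rightarrow> bool" where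
  "is_sink n m v \<longleftrightarrow> (\<forall>e. incident n e v \<longrightarrow> points_to n m e v)"

definition is_source :: "nat \<Rightarrow> marking \<Rightarrow> nat \<Rightarrow> bool" where
  "is_source n m v \<longleftrightarrow> (\<forall>e. incident n e v \<longrightarrow> points_from n m e v)"

definition no_sink_source :: "nat \<Rightarrow> marking \<Rightarrow> bool" where
  "no_sink_source n m \<longleftrightarrow> (\<forall>v<n. \<not> is_sink n m v \<and> \<not> is_source n m v)"

definition markable :: "nat \<Rightarrow> marking \<Rightarrow> nat \<Rightarrow> bool" where
  "markable n m e \<longleftrightarrow> e < n \<and> m e = None \<and> (\<exists>d. no_sink_source n (m(e := Some d)))"

end

theory Submission
  imports Defs
begin

definition pr :: "nat \<Rightarrow> nat \<Rightarrow> nat" where "pr n e = (e + n - 1) mod n"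

definition okp :: "bool option \<Rightarrow> bool option \<Rightarrow> bool" where
  "okp a b \<longleftrightarrow> \<not>(a = Some True \<and> b = Some False) \<and> \<not>(a = Some False \<and> b = Some True)"

lemma pr_lt: "n \<ge> 3 \<Longrightarrow> pr n e < n" by (simp add: pr_def)
lemma s_lt: "n \<ge> 3 \<Longrightarrow> Suc e mod n < n" by simp

lemma pr_val: "n \<ge> 3 \<Longrightarrow> e < n \<Longrightarrow> pr n e = (if e = 0 then n - 1 else e - 1)"
proof -
  assume n: "n \<ge> 3" and e: "e < n"
  show ?thesis
  proof (cases "e = 0")
    case True then show ?thesis using n by (simp add: pr_def)
  next
    case False
    then have "e + n - 1 = (e - 1) + n" by simp
    then have "pr n e = ((e - 1) + n) mod n" by (simp add: pr_def)
    also have "... = e - 1" using e by simp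
    finally show ?thesis using False by simp
  qed
qed

lemma pr_s: "n \<ge> 3 \<Longrightarrow> e < n \<Longrightarrow> pr n (Suc e mod n) = e"
proof -
  assume n: "n \<ge> 3" and e: "e < n"
  show ?thesis
  proof (cases "Suc e = n")
    case True
    then have "Suc e mod n = 0" by simp
    then show ?thesis using pr_val[OF n, of 0] n True by simp
  next
    case False
    then have s: "Suc e mod n = Suc e" using e by simp
    have "Suc e < n" using False e by simp
    then show ?thesis unfolding s using pr_val[OF n, of "Suc e"] by simp
  qed
qed

lemma s_pr: "n \<ge> 3 \<Longrightarrow> e < n \<Longrightarrow> Suc (pr n e) mod n = e"
proof -
  assume n: "n \<ge> 3" and e: "e < n"
  show ?thesis
  proof (cases "e = 0")
    case True
    then have "pr n e = n - 1" using pr_val[OF n e] by simp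
    then have "Suc (pr n e) = n" using n by simp
    then show ?thesis using True by simp
  next
    case False
    then have "pr n e = e - 1" using pr_val[OF n e] by simp
    then have "Suc (pr n e) = e" using False by simp
    then show ?thesis using e by simp
  qed
qed

lemma pr_ne: "n \<ge> 3 \<Longrightarrow> e < n \<Longrightarrow> pr n e \<noteq> e"
  using pr_val[of n e] by auto

lemma s_ne: "n \<ge> 3 \<Longrightarrow> e < n \<Longrightarrow> Suc e mod n \<noteq> e"
  by (cases "Suc e = n") auto

lemma pr_ne_s: "n \<ge> 3 \<Longrightarrow> e < n \<Longrightarrow> pr n e \<noteq> Suc e mod n"
  using pr_val[of n e] by (cases "Suc e = n") auto

lemma pr_eq: "n \<ge> 3 \<Longrightarrow> v < n \<Longrightarrow> e < n \<Longrightarrow> (pr n v = e) \<longleftrightarrow> v = Suc e mod n"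
  using pr_s s_pr by metis

lemma incident_iff: "n \<ge> 3 \<Longrightarrow> v < n \<Longrightarrow> incident n e v \<longleftrightarrow> e = v \<or> e = pr n v"
  unfolding incident_def using pr_eq[of n v e] pr_lt[of n v] by auto

lemma sink_iff: "n \<ge> 3 \<Longrightarrow> v < n \<Longrightarrow>
   is_sink n m v \<longleftrightarrow> m v = Some False \<and> m (pr n v) = Some True"
proof -
  assume n: "n \<ge> 3" and v: "v < n"
  have "is_sink n m v \<longleftrightarrow> points_to n m v v \<and> points_to n m (pr n v) v"
    unfolding is_sink_def incident_iff[OF n v] by auto
  moreover have "points_to n m v v \<longleftrightarrow> m v = Some False"
    unfolding points_to_def using s_ne[OF n v] by auto
  moreover have "points_to n m (pr n v) v \<longleftrightarrow> m (pr n v) = Some True"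
    unfolding points_to_def using s_pr[OF n v] pr_ne[OF n v] by auto
  ultimately show ?thesis by blast
qed

lemma source_iff: "n \<ge> 3 \<Longrightarrow> v < n \<Longrightarrow>
   is_source n m v \<longleftrightarrow> m v = Some True \<and> m (pr n v) = Some False"
proof -
  assume n: "n \<ge> 3" and v: "v < n"
  have "is_source n m v \<longleftrightarrow> points_from n m v v \<and> points_from n m (pr n v) v"
    unfolding is_source_def incident_iff[OF n v] by auto
  moreover have "points_from n m v v \<longleftrightarrow> m v = Some True"
    unfolding points_from_def using s_ne[OF n v] by auto
  moreover have "points_from n m (pr n v) v \<longleftrightarrow> m (pr n v) = Some False"
    unfolding points_from_def using s_pr[OF n v] pr_ne[OF n v] by auto
  ultimately show ?thesis by blast
qed

lemma nss_iff: "n \<ge> 3 \<Longrightarrow> no_sink_source n m \<longleftrightarrow> (\<forall>v<n. okp (m (pr n v)) (m v))"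
  unfolding no_sink_source_def okp_def using sink_iff[of n _ m] source_iff[of n _ m] by auto

lemma unm:
  assumes n: "n \<ge> 3" and ns: "no_sink_source n m" and e: "e < n" "m e = None"
    and nm: "\<not> markable n m e"
  shows "\<exists>a. m (pr n e) = Some a \<and> m (Suc e mod n) = Some (\<not> a)"
proof -
  have ok: "\<forall>v<n. okp (m (pr n v)) (m v)" using ns nss_iff n by blast
  have bad: "\<exists>v<n. \<not> okp ((m(e := Some d)) (pr n v)) ((m(e := Some d)) v)" for d
    using nm e nss_iff[OF n, of "m(e := Some d)"] unfolding markable_def by blast
  have cases_d: "(m (pr n e) = Some (\<not> d)) \<or> (m (Suc e mod n) = Some (\<not> d))" for d
  proof -
    obtain v where v: "v < n" "\<not> okp ((m(e := Some d)) (pr n v)) ((m(e := Some d)) v)"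
      using bad by blast
    have pe: "pr n e \<noteq> e" using pr_ne n e by blast
    have pv: "pr n v = e \<longleftrightarrow> v = Suc e mod n" using pr_eq n v e by blast
    show ?thesis
    proof (cases "v = e")
      case True
      then show ?thesis using v pe unfolding okp_def by (cases d) auto
    next
      case False
      show ?thesis
      proof (cases "v = Suc e mod n")
        case True
        then show ?thesis using v pv False unfolding okp_def by (cases d) auto
      next
        case F2: False
        then show ?thesis using v pv False ok by auto
      qed
    qed
  qed
  show ?thesis using cases_d[of True] cases_d[of False] by auto
qed

lemma flips: "even (card {i. i < k \<and> G i \<noteq> G (Suc i)}) \<longleftrightarrow> (G 0 = (G k :: bool))"
proof (induction k)
  case 0 then show ?case by simp
next
  case (Suc k)
  let ?A = "{i. i < k \<and> G i \<noteq> G (Suc i)}"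
  have fin: "finite ?A" by simp
  have kn: "k \<notin> ?A" by simp
  show ?case
  proof (cases "G k \<noteq> G (Suc k)")
    case True
    then have eq: "{i. i < Suc k \<and> G i \<noteq> G (Suc i)} = insert k ?A"
      by (auto simp: less_Suc_eq)
    have "card {i. i < Suc k \<and> G i \<noteq> G (Suc i)} = Suc (card ?A)"
      unfolding eq using fin kn by (rule card_insert_disjoint)
    then show ?thesis using Suc.IH True by auto
  next
    case False
    then have eq: "{i. i < Suc k \<and> G i \<noteq> G (Suc i)} = ?A"
      by (auto simp: less_Suc_eq)
    show ?thesis unfolding eq using Suc.IH False by auto
  qed
qed

theorem lemma4p2:
  fixes n :: nat and m :: marking
  assumes "n \<ge> 3"
    and "no_sink_source n m"
    and "\<forall>e<n. m e = None \<longrightarrow> \<not> markable n m e"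
  shows "even (card {e. e < n \<and> m e = None})"
proof -
  have n: "n \<ge> 3" by fact
  have ok: "\<forall>v<n. okp (m (pr n v)) (m v)" using assms(2) nss_iff n by blast
  define g where "g e = (if m e = None then m (pr n e) = Some True else m e = Some True)" for e
  define G where "G i = g (i mod n)" for i
  have key: "G i \<noteq> G (Suc i) \<longleftrightarrow> m i = None" if i: "i < n" for i
  proof -
    let ?s = "Suc i mod n"
    have Gi: "G i = g i" using i by (simp add: G_def)
    have Gs: "G (Suc i) = g ?s" by (simp add: G_def)
    have ps: "pr n ?s = i" using pr_s n i by blast
    have sl: "?s < n" using n by simp
    show ?thesis
    proof (cases "m i = None")
      case True
      then obtain a where a: "m (pr n i) = Some a" "m ?s = Some (\<not> a)"
        using unm[OF n assms(2) i True] assms(3) i by blast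
      then show ?thesis using True Gi Gs unfolding g_def by auto
    next
      case False
      then obtain a where a: "m i = Some a" by auto
      show ?thesis
      proof (cases "m ?s = None")
        case True
        then show ?thesis using a Gi Gs ps unfolding g_def by auto
      next
        case F2: False
        then obtain b where b: "m ?s = Some b" by auto
        have "okp (m (pr n ?s)) (m ?s)" using ok sl by blast
        then have "okp (m i) (m ?s)" by (simp only: ps)
        then have "a = b" using a b unfolding okp_def by (cases a; cases b) auto
        then show ?thesis using a b Gi Gs unfolding g_def by auto
      qed
    qed
  qed
  have "{e. e < n \<and> m e = None} = {i. i < n \<and> G i \<noteq> G (Suc i)}"
  proof (intro Collect_cong conj_cong refl)
    fix e assume "e < n" then show "(m e = None) = (G e \<noteq> G (Suc e))" using key by simp
  qed
  moreover have "G 0 = G n" by (simp add: G_def)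
  ultimately show ?thesis using flips[of n G] by simp
qed

end
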